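(* Let $D$ be a $3$-dicritical semi-complete digraph. Then every arc $a$ of $D$ either belongs to a digon or is contained in an induced directed triangle of $D$.
   Context: Digraphs have no loops or parallel arcs; a digon is a pair of arcs $uv,vu$. A $2$-dicolouring is a map to $\{1,2\}$ whose colour classes induce acyclic subdigraphs. $D$ is $3$-dicritical if $D$ has no $2$-dicolouring but every proper subdigraph has one. $D$ is semi-complete if every two distinct vertices are joined by at least one arc. An induced directed triangle is a set of three vertices $x,y,z$ such that the subdigraph induced by them has exactly the arcs $xy,yz,zx$. *)

theory Defs
  imports Main
begin

definition digraph :: "'a set \<Rightarrow> ('a \<times> 'a) set \<Rightarrow> bool" where
  "digraph V A \<longleftrightarrow> finite V \<and> A \<subseteq> V \<times> V \<and> (\<forall>v. (v, v) \<notin> A)"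

definition dicolouring :: "nat \<Rightarrow> 'a set \<Rightarrow> ('a \<times> 'a) set \<Rightarrow> ('a \<Rightarrow> nat) \<Rightarrow> bool" where
  "dicolouring k V A c \<longleftrightarrow>
     (\<forall>v\<in>V. c v \<in> {1..k}) \<and>
     (\<forall>i\<in>{1..k}. acyclic (A \<inter> ({v\<in>V. c v = i} \<times> {v\<in>V. c v = i})))"

definition dicolourable :: "nat \<Rightarrow> 'a set \<Rightarrow> ('a \<times> 'a) set \<Rightarrow> bool" where
  "dicolourable k V A \<longleftrightarrow> (\<exists>c. dicolouring k V A c)"

definition subdigraph :: "'a set \<Rightarrow> ('a \<times> 'a) set \<Rightarrow> 'a set \<Rightarrow> ('a \<times> 'a) set \<Rightarrow> bool" where
  "subdigraph V' A' V A \<longleftrightarrow> V' \<subseteq> V \<and> A' \<subseteq> A \<and> A' \<subseteq> V' \<times> V'"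

definition dicritical :: "nat \<Rightarrow> 'a set \<Rightarrow> ('a \<times> 'a) set \<Rightarrow> bool" where
  "dicritical k V A \<longleftrightarrow> digraph V A \<and> \<not> dicolourable (k - 1) V A \<and>
     (\<forall>V' A'. subdigraph V' A' V A \<and> (V', A') \<noteq> (V, A) \<longrightarrow> dicolourable (k - 1) V' A')"

definition semi_complete :: "'a set \<Rightarrow> ('a \<times> 'a) set \<Rightarrow> bool" where
  "semi_complete V A \<longleftrightarrow> (\<forall>u\<in>V. \<forall>v\<in>V. u \<noteq> v \<longrightarrow> (u, v) \<in> A \<or> (v, u) \<in> A)"

definition in_digon :: "('a \<times> 'a) set \<Rightarrow> 'a \<times> 'a \<Rightarrow> bool" where
  "in_digon A a \<longleftrightarrow> a \<in> A \<and> (snd a, fst a) \<in> A"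

definition induced_directed_triangle :: "'a set \<Rightarrow> ('a \<times> 'a) set \<Rightarrow> 'a \<Rightarrow> 'a \<Rightarrow> 'a \<Rightarrow> bool" where
  "induced_directed_triangle V A x y z \<longleftrightarrow> x \<in> V \<and> y \<in> V \<and> z \<in> V \<and>
     x \<noteq> y \<and> y \<noteq> z \<and> z \<noteq> x \<and>
     A \<inter> ({x, y, z} \<times> {x, y, z}) = {(x, y), (y, z), (z, x)}"

end

theory Submission
  imports Defs
begin

lemma key:
  assumes acy: "acyclic B" and BS: "B \<subseteq> S \<times> S"
    and sc: "\<forall>x\<in>S. \<forall>y\<in>S. x \<noteq> y \<longrightarrow> (x, y) \<in> B \<or> (y, x) \<in> B \<or> (x = u \<and> y = v) \<or> (x = v \<and> y = u)"
    and nvu: "(v, u) \<notin> B" and uv: "u \<noteq> v"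
    and tr: "(v, u) \<in> B\<^sup>+"
  shows "\<exists>w. (v, w) \<in> B \<and> (w, u) \<in> B"
proof (rule ccontr)
  assume no: "\<not> ?thesis"
  have "(v, y) \<in> B\<^sup>+ \<Longrightarrow> (v, y) \<in> B" for y
  proof (induction rule: trancl_induct)
    case (base y) then show ?case .
  next
    case (step y z)
    have vS: "v \<in> S" "y \<in> S" "z \<in> S" using step BS by auto
    have "v \<noteq> z"
    proof
      assume "v = z"
      then have "(v, v) \<in> B\<^sup>+" using step by auto
      then show False using acy unfolding acyclic_def by blast
    qed
    have "(z, v) \<notin> B"
    proof
      assume "(z, v) \<in> B"
      then have "(v, v) \<in> B\<^sup>+" using step
        by (meson trancl.trancl_into_trancl trancl_into_trancl2 r_into_trancl)
      then show False using acy unfolding acyclic_def by blast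
    qed
    moreover have "z \<noteq> u" using no step by auto
    ultimately show ?case using sc vS \<open>v \<noteq> z\<close> uv by blast
  qed
  from this[OF tr] nvu show False by simp
qed

theorem lemma14:
  fixes V :: "'a set" and A :: "('a \<times> 'a) set"
  assumes "dicritical 3 V A"
    and "semi_complete V A"
    and "a \<in> A"
  shows "in_digon A a \<or>
         (\<exists>x y z. induced_directed_triangle V A x y z \<and> a \<in> {(x, y), (y, z), (z, x)})"
proof (cases "in_digon A a")
  case True then show ?thesis by simp
next
  case False
  obtain u v where a: "a = (u, v)" by (cases a)
  have dg: "digraph V A" and nc: "\<not> dicolourable 2 V A"
    and sub: "\<And>V' A'. subdigraph V' A' V A \<Longrightarrow> (V', A') \<noteq> (V, A) \<Longrightarrow> dicolourable 2 V' A'"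
    using assms(1) unfolding dicritical_def by auto
  have AV: "A \<subseteq> V \<times> V" and loop: "\<And>x. (x, x) \<notin> A" using dg unfolding digraph_def by auto
  have uvA: "(u, v) \<in> A" using assms(3) a by simp
  have vu: "(v, u) \<notin> A" using False a uvA unfolding in_digon_def by simp
  have uv: "u \<noteq> v" using loop uvA by auto
  have "dicolourable 2 V (A - {a})"
    apply (rule sub) using AV assms(3) unfolding subdigraph_def by auto
  then obtain c where c: "dicolouring 2 V (A - {a}) c" unfolding dicolourable_def by auto
  have cV: "\<forall>v\<in>V. c v \<in> {1..2}" using c unfolding dicolouring_def by auto
  from nc c obtain i where i: "i \<in> {1..2::nat}" and nacy: "\<not> acyclic (A \<inter> ({x\<in>V. c x = i} \<times> {x\<in>V. c x = i}))"
    unfolding dicolourable_def dicolouring_def by blast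
  define S where "S = {x\<in>V. c x = i}"
  define B where "B = (A - {a}) \<inter> (S \<times> S)"
  have acy: "acyclic B" using c i unfolding dicolouring_def B_def S_def by auto
  have inS: "u \<in> S \<and> v \<in> S"
  proof (rule ccontr)
    assume "\<not> (u \<in> S \<and> v \<in> S)"
    then have "A \<inter> (S \<times> S) = B" unfolding B_def using a by auto
    then show False using acy nacy unfolding S_def by simp
  qed
  have eq: "A \<inter> (S \<times> S) = insert (u, v) B" unfolding B_def using a inS uvA by auto
  have "(v, u) \<in> B\<^sup>*" using nacy acy eq unfolding S_def[symmetric] by (simp add: acyclic_insert)
  then have tr: "(v, u) \<in> B\<^sup>+" using uv by (auto simp: rtrancl_eq_or_trancl)
  have BS: "B \<subseteq> S \<times> S" unfolding B_def by auto
  have SV: "S \<subseteq> V" unfolding S_def by auto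
  have sc: "\<forall>x\<in>S. \<forall>y\<in>S. x \<noteq> y \<longrightarrow> (x, y) \<in> B \<or> (y, x) \<in> B \<or> (x = u \<and> y = v) \<or> (x = v \<and> y = u)"
    using assms(2) SV unfolding semi_complete_def B_def a by blast
  have nvu: "(v, u) \<notin> B" using vu unfolding B_def by auto
  obtain w where w: "(v, w) \<in> B" "(w, u) \<in> B" using key[OF acy BS sc nvu uv tr] by blast
  have wA: "(v, w) \<in> A" "(w, u) \<in> A" using w unfolding B_def by auto
  have wV: "w \<in> V" "u \<in> V" "v \<in> V" using wA AV by auto
  have wu: "w \<noteq> u" "w \<noteq> v" using wA loop by auto
  have cyc: "\<And>x y. (x, y) \<in> B \<Longrightarrow> (y, x) \<in> B \<Longrightarrow> False"
    using acy unfolding acyclic_def by (meson trancl.trancl_into_trancl r_into_trancl)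
  have wv: "(w, v) \<notin> A"
  proof
    assume "(w, v) \<in> A"
    then have "(w, v) \<in> B" using w wu unfolding B_def a by auto
    then show False using cyc w by blast
  qed
  have uw: "(u, w) \<notin> A"
  proof
    assume "(u, w) \<in> A"
    then have "(u, w) \<in> B" using w wu unfolding B_def a by auto
    then show False using cyc w by blast
  qed
  have "induced_directed_triangle V A u v w"
    unfolding induced_directed_triangle_def
    using wV wu uv uvA wA vu wv uw loop by auto
  then show ?thesis using a by blast
qed

end
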